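(* Let $\star$ be a state over time function satisfying axioms (E) and (P). Then for all channels $\mathcal{E}_{B|A}$, $\mathcal{F}_{C|B}$, $\mathcal{G}_{D|C}$ and every $\rho_A\in\mathfrak{S}(A)$, $$\mathrm{Tr}_{BC}\big[\mathcal{G}_{D|C}\star(\mathcal{F}_{C|B}\star(\mathcal{E}_{B|A}\star\rho_A))\big]=(\mathcal{G}\circ\mathcal{F}\circ\mathcal{E})_{D|A}\star\rho_A,$$ where each star applied to an operator on several systems acts on the indicated subsystem, with the other systems as spectators as in axiom (E).
   Context: Systems are finite-dimensional Hilbert spaces; $\mathfrak{B}(A)$ linear operators, $\mathfrak{S}(A)$ density operators, $\mathfrak{C}(A,B)$ quantum channels (CPTP maps $\mathfrak{B}(A)\to\mathfrak{B}(B)$). A state over time function assigns to all systems $A,B$ a map $\star:\mathfrak{C}(A,B)\times\mathfrak{S}(A)\to\mathfrak{B}(A\otimes B)$, $(\mathcal{E},\rho)\mapsto\mathcal{E}_{B|A}\star\rho_A$, with $\mathrm{Tr}_A[\mathcal{E}\star\rho]=\mathcal{E}(\rho)$ and $\mathrm{Tr}_B[\mathcal{E}\star\rho]=\rho$, extended homogeneously by $(\lambda\mathcal{E})\star\rho=\mathcal{E}\star(\lambda\rho)=\lambda(\mathcal{E}\star\rho)$, $\lambda\in\mathbb{C}$. A quantum state over spacetime on $A\otimes E$ is either a density operator on $A\otimes E$ or an operator of the form $\mathcal{F}\star\sigma$ (possibly iterated). Axiom (E): for all systems $A,B,E$, every quantum state over spacetime $\rho_{AE}$ and every channel $\mathcal{E}_{B|A}$,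 an operator $\mathcal{E}_{B|A}\star\rho_{AE}$ on $A\otimes B\otimes E$ is defined such that for every completely positive trace-non-increasing map $\mathcal{I}_E$ on $E$, $\mathcal{I}_E[\mathcal{E}\star\rho_{AE}]=\mathcal{E}\star\mathcal{I}_E(\rho_{AE})$, and $\mathrm{Tr}_A[\mathcal{E}\star\rho_{AE}]=(\mathcal{E}\otimes\mathrm{id}_E)(\rho_{AE})$. Axiom (P): for all channels $\mathcal{E}_{B|A}$, $\mathcal{F}_{C|B}$ and states $\rho_A$, $\mathrm{Tr}_B[\mathcal{F}_{C|B}\star(\mathcal{E}_{B|A}\star\rho_A)]=(\mathcal{F}\circ\mathcal{E})_{C|A}\star\rho_A$, with $\mathcal{F}_{C|B}\star(\cdot)$ acting on the $B$-part (spectator $A$). *)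

theory Defs
  imports "Jordan_Normal_Form.Matrix" "HOL-Combinatorics.Permutations"
begin

text \<open>A system is C^n, identified with its dimension n (n > 0). Composite systems are ordered tensor products with the standard
  mixed-radix (Kronecker) indexing: index (x, y) of X (x) Y (dimensions dX, dY) is x * dY + y.\<close>

definition mtrace :: "nat \<Rightarrow> complex mat \<Rightarrow> complex" where
  "mtrace n M = (\<Sum>i<n. M $$ (i, i))"

definition psd :: "nat \<Rightarrow> complex mat \<Rightarrow> bool" where
  "psd n M \<longleftrightarrow> M \<in> carrier_mat n n \<and>
     (\<forall>v :: nat \<Rightarrow> complex. (\<Sum>i<n. \<Sum>j<n. cnj (v i) * M $$ (i, j) * v j) \<in> \<real> \<and>
        Re (\<Sum>i<n. \<Sum>j<n. cnj (v i) * M $$ (i, j) * v j) \<ge> 0)"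

definition density :: "nat \<Rightarrow> complex mat \<Rightarrow> bool" where
  "density n \<rho> \<longleftrightarrow> psd n \<rho> \<and> mtrace n \<rho> = 1"

text \<open>partial trace over the middle factor of L (x) M (x) R\<close>
definition ptrace_mid :: "nat \<Rightarrow> nat \<Rightarrow> nat \<Rightarrow> complex mat \<Rightarrow> complex mat" where
  "ptrace_mid dL dM dR X = mat (dL * dR) (dL * dR) (\<lambda>(i, j).
     \<Sum>m<dM. X $$ ((i div dR) * (dM * dR) + m * dR + i mod dR,
                   (j div dR) * (dM * dR) + m * dR + j mod dR))"

text \<open>\<open>id_n \<otimes> f\<close> applied to an operator on C^n (x) A, where f maps operators on A to operators on B\<close>
definition lift_last :: "nat \<Rightarrow> nat \<Rightarrow> nat \<Rightarrow> (complex mat \<Rightarrow> complex mat) \<Rightarrow> complex mat \<Rightarrow> complex mat" where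
  "lift_last n dA dB f X = mat (n * dB) (n * dB) (\<lambda>(i, j).
     f (mat dA dA (\<lambda>(a, a'). X $$ ((i div dB) * dA + a, (j div dB) * dA + a')))
       $$ (i mod dB, j mod dB))"

text \<open>\<open>f \<otimes> id_R\<close> applied to an operator on A (x) R, where f maps operators on A to operators on B\<close>
definition lift_first :: "nat \<Rightarrow> nat \<Rightarrow> nat \<Rightarrow> (complex mat \<Rightarrow> complex mat) \<Rightarrow> complex mat \<Rightarrow> complex mat" where
  "lift_first dA dB dR f X = mat (dB * dR) (dB * dR) (\<lambda>(i, j).
     f (mat dA dA (\<lambda>(a, a'). X $$ (a * dR + i mod dR, a' * dR + j mod dR)))
       $$ (i div dR, j div dR))"

definition cp_map :: "nat \<Rightarrow> nat \<Rightarrow> (complex mat \<Rightarrow> complex mat) \<Rightarrow> bool" where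
  "cp_map dA dB f \<longleftrightarrow>
     (\<forall>X \<in> carrier_mat dA dA. f X \<in> carrier_mat dB dB) \<and>
     (\<forall>X \<in> carrier_mat dA dA. \<forall>Y \<in> carrier_mat dA dA. f (X + Y) = f X + f Y) \<and>
     (\<forall>X \<in> carrier_mat dA dA. \<forall>c. f (c \<cdot>\<^sub>m X) = c \<cdot>\<^sub>m f X) \<and>
     (\<forall>n X. psd (n * dA) X \<longrightarrow> psd (n * dB) (lift_last n dA dB f X))"

definition channel :: "nat \<Rightarrow> nat \<Rightarrow> (complex mat \<Rightarrow> complex mat) \<Rightarrow> bool" where
  "channel dA dB f \<longleftrightarrow> cp_map dA dB f \<and>
     (\<forall>X \<in> carrier_mat dA dA. mtrace dB (f X) = mtrace dA X)"

definition cptni :: "nat \<Rightarrow> nat \<Rightarrow> (complex mat \<Rightarrow> complex mat) \<Rightarrow> bool" where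
  "cptni dA dB f \<longleftrightarrow> cp_map dA dB f \<and>
     (\<forall>X. psd dA X \<longrightarrow> Re (mtrace dB (f X)) \<le> Re (mtrace dA X))"

text \<open>Mixed-radix encoding of multi-indices of a tensor product of factors with dimensions ds
  (first factor most significant).\<close>
fun encode :: "nat list \<Rightarrow> nat list \<Rightarrow> nat" where
  "encode (d # ds) (x # xs) = x * prod_list ds + encode ds xs"
| "encode _ _ = 0"

fun decode :: "nat list \<Rightarrow> nat \<Rightarrow> nat list" where
  "decode [] n = []"
| "decode (d # ds) n = (n div prod_list ds) # decode ds (n mod prod_list ds)"

text \<open>Reordering of tensor factors: new factor i is old factor p i.\<close>
definition permute_op :: "nat list \<Rightarrow> (nat \<Rightarrow> nat) \<Rightarrow> complex mat \<Rightarrow> complex mat" where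
  "permute_op ds p X = (let ds' = permute_list p ds; N = prod_list ds in
     mat N N (\<lambda>(i, j). X $$ (encode ds (permute_list (inv_into UNIV p) (decode ds' i)),
                              encode ds (permute_list (inv_into UNIV p) (decode ds' j)))))"

text \<open>Types of the two star maps.
  \<open>star dA dB \<E> \<rho>\<close>: \<open>\<E>_{B|A} \<star> \<rho>_A\<close>, an operator on A (x) B.
  \<open>starE dE dA dB \<E> \<rho>\<close>: \<open>\<E>_{B|A} \<star> \<rho>_{EA}\<close> with spectator E, \<rho> an operator on E (x) A,
  result an operator on E (x) A (x) B.\<close>
type_synonym star_fun = "nat \<Rightarrow> nat \<Rightarrow> (complex mat \<Rightarrow> complex mat) \<Rightarrow> complex mat \<Rightarrow> complex mat"
type_synonym starE_fun = "nat \<Rightarrow> nat \<Rightarrow> nat \<Rightarrow> (complex mat \<Rightarrow> complex mat) \<Rightarrow> complex mat \<Rightarrow> complex mat"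

text \<open>state over time function (with its homogeneous extension)\<close>
definition state_over_time :: "star_fun \<Rightarrow> bool" where
  "state_over_time star \<longleftrightarrow>
    (\<forall>dA dB \<E> \<rho>. 0 < dA \<and> 0 < dB \<and> channel dA dB \<E> \<and> density dA \<rho> \<longrightarrow>
       ptrace_mid 1 dA dB (star dA dB \<E> \<rho>) = \<E> \<rho> \<and>
       ptrace_mid dA dB 1 (star dA dB \<E> \<rho>) = \<rho> \<and>
       (\<forall>c. star dA dB (\<lambda>X. c \<cdot>\<^sub>m \<E> X) \<rho> = c \<cdot>\<^sub>m star dA dB \<E> \<rho> \<and>
            star dA dB \<E> (c \<cdot>\<^sub>m \<rho>) = c \<cdot>\<^sub>m star dA dB \<E> \<rho>))"

inductive qsos :: "star_fun \<Rightarrow> starE_fun \<Rightarrow> nat list \<Rightarrow> complex mat \<Rightarrow> bool"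
  for star starE where
  qsos_density: "\<lbrakk>\<forall>d \<in> set ds. 0 < d; density (prod_list ds) X\<rbrakk> \<Longrightarrow> qsos star starE ds X"
| qsos_star: "\<lbrakk>0 < dA; 0 < dB; density dA \<sigma>; channel dA dB F\<rbrakk>
     \<Longrightarrow> qsos star starE [dA, dB] (star dA dB F \<sigma>)"
| qsos_iter: "\<lbrakk>qsos star starE (ds1 @ ds2) X; 0 < dB; channel (prod_list ds2) dB F\<rbrakk>
     \<Longrightarrow> qsos star starE (ds1 @ ds2 @ [dB]) (starE (prod_list ds1) (prod_list ds2) dB F X)"
| qsos_perm: "\<lbrakk>qsos star starE ds X; p permutes {..<length ds}\<rbrakk>
     \<Longrightarrow> qsos star starE (permute_list p ds) (permute_op ds p X)"

definition qsos_on :: "star_fun \<Rightarrow> starE_fun \<Rightarrow> nat \<Rightarrow> nat \<Rightarrow> complex mat \<Rightarrow> bool" where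
  "qsos_on star starE dE dA X \<longleftrightarrow>
     (\<exists>ds1 ds2. prod_list ds1 = dE \<and> prod_list ds2 = dA \<and> qsos star starE (ds1 @ ds2) X)"

definition axiom_E :: "star_fun \<Rightarrow> starE_fun \<Rightarrow> bool" where
  "axiom_E star starE \<longleftrightarrow>
    (\<forall>dE dA dB \<rho> \<E>. 0 < dE \<and> 0 < dA \<and> 0 < dB \<and> qsos_on star starE dE dA \<rho> \<and> channel dA dB \<E> \<longrightarrow>
       (\<forall>dE' \<I>. 0 < dE' \<and> cptni dE dE' \<I> \<longrightarrow>
          lift_first dE dE' (dA * dB) \<I> (starE dE dA dB \<E> \<rho>) =
          starE dE' dA dB \<E> (lift_first dE dE' dA \<I> \<rho>)) \<and>
       ptrace_mid dE dA dB (starE dE dA dB \<E> \<rho>) = lift_last dE dA dB \<E> \<rho>)"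

definition axiom_P :: "star_fun \<Rightarrow> starE_fun \<Rightarrow> bool" where
  "axiom_P star starE \<longleftrightarrow>
    (\<forall>dA dB dC \<E> \<F> \<rho>. 0 < dA \<and> 0 < dB \<and> 0 < dC \<and> channel dA dB \<E> \<and> channel dB dC \<F> \<and>
        density dA \<rho> \<longrightarrow>
       ptrace_mid dA dB dC (starE dA dB dC \<F> (star dA dB \<E> \<rho>)) = star dA dC (\<F> \<circ> \<E>) \<rho>)"

end

theory Submission imports Defs begin
lemma sum_split_mult:
  fixes f :: "nat \<Rightarrow> 'a::comm_monoid_add"
  shows "(\<Sum>m<a*b. f m) = (\<Sum>i<a. \<Sum>j<b. f (i*b+j))"
proof -
  have "(\<Sum>m<a*b. f m) = (\<Sum>i<a. sum f {i*b..<i*b+b})" using sum.nat_group[of f b a] by (simp add: mult.commute)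
  also have "\<dots> = (\<Sum>i<a. \<Sum>j<b. f (i*b+j))"
  proof (rule sum.cong[OF refl])
    fix i
    have "sum f {i*b..<i*b+b} = sum f ((\<lambda>j. i*b+j) ` {..<b})"
      by (simp add: lessThan_atLeast0 add.commute)
    also have "\<dots> = (\<Sum>j<b. f (i*b+j))" by (subst sum.reindex) (auto simp: inj_on_def)
    finally show "sum f {i*b..<i*b+b} = (\<Sum>j<b. f (i*b+j))" .
  qed
  finally show ?thesis .
qed

lemma idx_lt: "(i::nat) < a \<Longrightarrow> m < b \<Longrightarrow> i*b+m < a*b"
proof -
  assume "i < a" "m < b"
  hence "i*b+m < i*b+b" by simp
  also have "\<dots> = Suc i * b" by simp
  also have "\<dots> \<le> a*b" using \<open>i<a\<close> by (simp add: mult_le_mono1 Suc_leI del: mult_Suc)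
  finally show ?thesis .
qed

lemma sum_sel:
  fixes g :: "nat \<Rightarrow> 'a::comm_monoid_add"
  assumes "m < b"
  shows "(\<Sum>k<a*b. if k mod b = m then g k else 0) = (\<Sum>i<a. g (i*b+m))"
proof -
  have "(\<Sum>k<a*b. if k mod b = m then g k else 0) = (\<Sum>i<a. \<Sum>j<b. if (i*b+j) mod b = m then g (i*b+j) else 0)"
    by (rule sum_split_mult)
  also have "\<dots> = (\<Sum>i<a. \<Sum>j<b. if j = m then g (i*b+j) else 0)"
    by (intro sum.cong refl) auto
  also have "\<dots> = (\<Sum>i<a. g (i*b+m))" using assms by simp
  finally show ?thesis .
qed

definition pt :: "nat \<Rightarrow> nat \<Rightarrow> complex mat \<Rightarrow> complex mat" where
  "pt dA dB Y = mat dA dA (\<lambda>(i,j). \<Sum>m<dB. Y $$ (i*dB+m, j*dB+m))"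

definition qf :: "nat \<Rightarrow> complex mat \<Rightarrow> (nat \<Rightarrow> complex) \<Rightarrow> complex" where
  "qf n M v = (\<Sum>i<n. \<Sum>j<n. cnj (v i) * M $$ (i, j) * v j)"

lemma psd_qf: "psd n M \<longleftrightarrow> M \<in> carrier_mat n n \<and> (\<forall>v. qf n M v \<in> \<real> \<and> Re (qf n M v) \<ge> 0)"
  unfolding psd_def qf_def by simp

lemma lift_pt_entry:
  assumes "i < n*dA" "j < n*dA"
  shows "lift_last n (dA*dB) dA (pt dA dB) X $$ (i,j) = (\<Sum>m<dB. X $$ (i*dB+m, j*dB+m))"
proof -
  have dA: "0 < dA" using assms by (cases dA) auto
  have e: "(k div dA)*(dA*dB) + (k mod dA * dB + m) = k*dB + m" for k m
  proof -
    have "k * dB = (k div dA * dA + k mod dA) * dB" by simp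
    also have "\<dots> = (k div dA)*(dA*dB) + k mod dA * dB" by (simp only: add_mult_distrib mult.assoc)
    finally show ?thesis by simp
  qed
  have "lift_last n (dA*dB) dA (pt dA dB) X $$ (i,j) =
     (\<Sum>m<dB. X $$ ((i div dA)*(dA*dB) + (i mod dA * dB + m), (j div dA)*(dA*dB) + (j mod dA * dB + m)))"
    using assms dA unfolding lift_last_def pt_def
    by (simp add: idx_lt)
  also have "\<dots> = (\<Sum>m<dB. X $$ (i*dB+m, j*dB+m))" by (simp only: e)
  finally show ?thesis .
qed

lemma qf_sel:
  fixes w :: "nat \<Rightarrow> complex"
  assumes "m < dB"
  defines "v \<equiv> (\<lambda>k. if k mod dB = m then w (k div dB) else 0)"
  shows "qf (N*dB) X v = (\<Sum>i<N. \<Sum>j<N. cnj (w i) * X $$ (i*dB+m, j*dB+m) * w j)"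
proof -
  have inner: "(\<Sum>l<N*dB. X $$ (p, l) * v l) = (\<Sum>j<N. X $$ (p, j*dB+m) * w j)" for p
  proof -
    have "(\<Sum>l<N*dB. X $$ (p, l) * v l) = (\<Sum>l<N*dB. if l mod dB = m then X $$ (p, l) * w (l div dB) else 0)"
      unfolding v_def by (intro sum.cong refl) auto
    also have "\<dots> = (\<Sum>j<N. X $$ (p, j*dB+m) * w ((j*dB+m) div dB))" by (rule sum_sel[OF assms(1)])
    also have "\<dots> = (\<Sum>j<N. X $$ (p, j*dB+m) * w j)" using assms(1) by simp
    finally show ?thesis .
  qed
  have "qf (N*dB) X v = (\<Sum>k<N*dB. cnj (v k) * (\<Sum>l<N*dB. X $$ (k, l) * v l))"
    unfolding qf_def by (simp add: sum_distrib_left mult.assoc)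
  also have "\<dots> = (\<Sum>k<N*dB. if k mod dB = m then cnj (w (k div dB)) * (\<Sum>j<N. X $$ (k, j*dB+m) * w j) else 0)"
    unfolding inner by (intro sum.cong refl) (auto simp: v_def)
  also have "\<dots> = (\<Sum>i<N. cnj (w ((i*dB+m) div dB)) * (\<Sum>j<N. X $$ (i*dB+m, j*dB+m) * w j))"
    by (rule sum_sel[OF assms(1)])
  also have "\<dots> = (\<Sum>i<N. \<Sum>j<N. cnj (w i) * X $$ (i*dB+m, j*dB+m) * w j)"
    using assms(1) by (simp add: sum_distrib_left mult.assoc)
  finally show ?thesis .
qed

lemma pt_cp:
  assumes "psd (n*(dA*dB)) X"
  shows "psd (n*dA) (lift_last n (dA*dB) dA (pt dA dB) X)"
proof -
  let ?L = "lift_last n (dA*dB) dA (pt dA dB) X"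
  have X: "psd ((n*dA)*dB) X" using assms by (simp add: mult.assoc)
  have key: "qf (n*dA) ?L w = (\<Sum>m<dB. qf ((n*dA)*dB) X (\<lambda>k. if k mod dB = m then w (k div dB) else 0))" for w
  proof -
    have "qf (n*dA) ?L w = (\<Sum>i<n*dA. \<Sum>j<n*dA. \<Sum>m<dB. cnj (w i) * X $$ (i*dB+m, j*dB+m) * w j)"
      unfolding qf_def by (intro sum.cong refl) (simp add: lift_pt_entry sum_distrib_left sum_distrib_right)
    also have "\<dots> = (\<Sum>m<dB. \<Sum>i<n*dA. \<Sum>j<n*dA. cnj (w i) * X $$ (i*dB+m, j*dB+m) * w j)"
      by (simp add: sum.swap[where A="{..<dB}"])
    also have "\<dots> = (\<Sum>m<dB. qf ((n*dA)*dB) X (\<lambda>k. if k mod dB = m then w (k div dB) else 0))"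
      by (intro sum.cong refl) (simp add: qf_sel)
    finally show ?thesis .
  qed
  show ?thesis unfolding psd_qf
  proof (intro conjI allI)
    show "?L \<in> carrier_mat (n*dA) (n*dA)" unfolding lift_last_def by simp
  next
    fix w
    show "qf (n*dA) ?L w \<in> \<real>" unfolding key using X by (auto simp: psd_qf)
    show "0 \<le> Re (qf (n*dA) ?L w)" unfolding key Re_sum using X by (auto simp: psd_qf intro: sum_nonneg)
  qed
qed

lemma pt_cptni: "cptni (dA*dB) dA (pt dA dB)"
  unfolding cptni_def cp_map_def
proof (intro conjI ballI allI impI)
  fix X :: "complex mat" assume "X \<in> carrier_mat (dA*dB) (dA*dB)"
  show "pt dA dB X \<in> carrier_mat dA dA" unfolding pt_def by simp
next
  fix X Y :: "complex mat" assume X: "X \<in> carrier_mat (dA*dB) (dA*dB)" and Y: "Y \<in> carrier_mat (dA*dB) (dA*dB)"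
  show "pt dA dB (X + Y) = pt dA dB X + pt dA dB Y"
    by (rule eq_matI) (use X Y in \<open>auto simp: pt_def idx_lt sum.distrib\<close>)
next
  fix X :: "complex mat" and c assume X: "X \<in> carrier_mat (dA*dB) (dA*dB)"
  show "pt dA dB (c \<cdot>\<^sub>m X) = c \<cdot>\<^sub>m pt dA dB X"
    by (rule eq_matI) (use X in \<open>auto simp: pt_def idx_lt sum_distrib_left\<close>)
next
  fix n and X :: "complex mat" assume "psd (n*(dA*dB)) X"
  thus "psd (n*dA) (lift_last n (dA*dB) dA (pt dA dB) X)" by (rule pt_cp)
next
  fix X :: "complex mat" assume "psd (dA*dB) X"
  have "mtrace dA (pt dA dB X) = mtrace (dA*dB) X"
    unfolding mtrace_def pt_def by (simp add: sum_split_mult)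
  thus "Re (mtrace dA (pt dA dB X)) \<le> Re (mtrace (dA*dB) X)" by simp
qed

lemma lift_last_comp:
  assumes "\<forall>Y \<in> carrier_mat dA dA. E Y \<in> carrier_mat dB dB"
  shows "lift_last n dB dC F (lift_last n dA dB E X) = lift_last n dA dC (F \<circ> E) X"
proof (rule eq_matI)
  fix i j assume i: "i < dim_row (lift_last n dA dC (F \<circ> E) X)" and j: "j < dim_col (lift_last n dA dC (F \<circ> E) X)"
  hence i': "i < n*dC" and j': "j < n*dC" by (auto simp: lift_last_def)
  have dC: "0 < dC" using i' by (cases dC) auto
  have id: "i div dC < n" "j div dC < n" using i' j' by (auto simp: less_mult_imp_div_less)
  let ?blk = "mat dA dA (\<lambda>(a, a'). X $$ ((i div dC) * dA + a, (j div dC) * dA + a'))"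
  have c: "E ?blk \<in> carrier_mat dB dB" using assms by simp
  have "mat dB dB (\<lambda>(b, b'). lift_last n dA dB E X $$ ((i div dC) * dB + b, (j div dC) * dB + b')) = E ?blk"
  proof (rule eq_matI)
    fix b b' assume "b < dim_row (E ?blk)" "b' < dim_col (E ?blk)"
    hence b: "b < dB" "b' < dB" using c by auto
    show "mat dB dB (\<lambda>(b, b'). lift_last n dA dB E X $$ ((i div dC) * dB + b, (j div dC) * dB + b')) $$ (b, b') = E ?blk $$ (b, b')"
      using b id by (simp add: lift_last_def idx_lt)
  qed (use c in auto)
  thus "lift_last n dB dC F (lift_last n dA dB E X) $$ (i, j) = lift_last n dA dC (F \<circ> E) X $$ (i, j)"
    using i' j' by (simp add: lift_last_def)
qed (auto simp: lift_last_def)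

lemma channel_comp:
  assumes "channel dA dB E" "channel dB dC F"
  shows "channel dA dC (F \<circ> E)"
proof -
  have cE: "\<forall>Y \<in> carrier_mat dA dA. E Y \<in> carrier_mat dB dB" using assms(1) by (simp add: channel_def cp_map_def)
  have cp: "psd (n*dC) (lift_last n dA dC (F \<circ> E) X)" if "psd (n*dA) X" for n X
  proof -
    have "psd (n*dB) (lift_last n dA dB E X)" using assms(1) that by (simp add: channel_def cp_map_def)
    hence "psd (n*dC) (lift_last n dB dC F (lift_last n dA dB E X))" using assms(2) by (simp add: channel_def cp_map_def)
    thus ?thesis by (simp add: lift_last_comp[OF cE])
  qed
  show ?thesis
  using assms cp unfolding channel_def cp_map_def by (auto simp: cE)
qed

lemma lift_first_pt: "lift_first (dA*dB) dA dC (pt dA dB) X = ptrace_mid dA dB dC X"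
proof (rule eq_matI)
  fix i j assume "i < dim_row (ptrace_mid dA dB dC X)" "j < dim_col (ptrace_mid dA dB dC X)"
  hence i: "i < dA*dC" and j: "j < dA*dC" by (auto simp: ptrace_mid_def)
  have dC: "0 < dC" using i by (cases dC) auto
  have id: "i div dC < dA" "j div dC < dA" using i j by (auto simp: less_mult_imp_div_less)
  have e: "((k div dC)*dB+m)*dC + k mod dC = (k div dC)*(dB*dC) + m*dC + k mod dC" for k m
    by (simp add: algebra_simps)
  show "lift_first (dA*dB) dA dC (pt dA dB) X $$ (i, j) = ptrace_mid dA dB dC X $$ (i, j)"
    using i j id by (simp add: lift_first_def ptrace_mid_def pt_def idx_lt e)
qed (auto simp: lift_first_def ptrace_mid_def)

lemma divmod_aux:
  assumes "(c::nat) < dC" "r < dD"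
  shows "(x*(dC*dD) + c*dD + r) div (dC*dD) = x" "(x*(dC*dD) + c*dD + r) mod (dC*dD) = c*dD + r"
proof -
  have lt: "c*dD + r < dC*dD" using assms by (rule idx_lt)
  have eq: "x*(dC*dD) + c*dD + r = (c*dD + r) + x*(dC*dD)" by (simp add: algebra_simps)
  have nz: "dC*dD \<noteq> 0" using lt by (metis not_less0 mult_0 mult_0_right)
  show "(x*(dC*dD) + c*dD + r) div (dC*dD) = x" unfolding eq using lt nz by simp
  show "(x*(dC*dD) + c*dD + r) mod (dC*dD) = c*dD + r" unfolding eq using lt by simp
qed

lemma ptrace_two:
  "ptrace_mid dA (dB*dC) dD Z = ptrace_mid dA dC dD (lift_first (dA*dB) dA (dC*dD) (pt dA dB) Z)"
proof (rule eq_matI)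
  fix i j assume "i < dim_row (ptrace_mid dA dC dD (lift_first (dA*dB) dA (dC*dD) (pt dA dB) Z))"
    "j < dim_col (ptrace_mid dA dC dD (lift_first (dA*dB) dA (dC*dD) (pt dA dB) Z))"
  hence i: "i < dA*dD" and j: "j < dA*dD" by (auto simp: ptrace_mid_def)
  have dD: "0 < dD" using i by (cases dD) auto
  have id: "i div dD < dA" "j div dD < dA" using i j by (auto simp: less_mult_imp_div_less)
  have im: "i mod dD < dD" "j mod dD < dD" using dD by auto
  have pl: "x div dD * (dC*dD) + c*dD + x mod dD < dA*(dC*dD)" if "x div dD < dA" "c < dC" "x mod dD < dD" for x c
  proof -
    have "c*dD + x mod dD < dC*dD" using that by (simp add: idx_lt)
    hence "x div dD * (dC*dD) + (c*dD + x mod dD) < dA*(dC*dD)" by (rule idx_lt[OF that(1)])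
    thus ?thesis by (simp add: add.assoc)
  qed
  have "ptrace_mid dA dC dD (lift_first (dA*dB) dA (dC*dD) (pt dA dB) Z) $$ (i, j)
     = (\<Sum>c<dC. \<Sum>b<dB. Z $$ ((i div dD * dB + b) * (dC*dD) + (c*dD + i mod dD),
                              (j div dD * dB + b) * (dC*dD) + (c*dD + j mod dD)))"
    using i j id im by (simp add: ptrace_mid_def lift_first_def pt_def pl divmod_aux idx_lt)
  also have "\<dots> = (\<Sum>b<dB. \<Sum>c<dC. Z $$ ((i div dD) * (dB*dC*dD) + (b*dC+c) * dD + i mod dD,
                              (j div dD) * (dB*dC*dD) + (b*dC+c) * dD + j mod dD))"
    by (subst sum.swap) (simp add: algebra_simps)
  also have "\<dots> = (\<Sum>m<dB*dC. Z $$ ((i div dD) * (dB*dC*dD) + m * dD + i mod dD,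
                              (j div dD) * (dB*dC*dD) + m * dD + j mod dD))"
    by (rule sum_split_mult[symmetric])
  also have "\<dots> = ptrace_mid dA (dB*dC) dD Z $$ (i, j)"
    using i j by (simp add: ptrace_mid_def mult.assoc)
  finally show "ptrace_mid dA (dB*dC) dD Z $$ (i, j) = ptrace_mid dA dC dD (lift_first (dA*dB) dA (dC*dD) (pt dA dB) Z) $$ (i, j)" by simp
qed (auto simp: lift_first_def ptrace_mid_def)

theorem proposition7:
  fixes star :: star_fun and starE :: starE_fun
    and \<E> \<F> \<G> :: "complex mat \<Rightarrow> complex mat" and \<rho> :: "complex mat"
    and dA dB dC dD :: nat
  assumes "state_over_time star" and "axiom_E star starE" and "axiom_P star starE"
    and "0 < dA" and "0 < dB" and "0 < dC" and "0 < dD"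
    and "channel dA dB \<E>" and "channel dB dC \<F>" and "channel dC dD \<G>"
    and "density dA \<rho>"
  shows "ptrace_mid dA (dB * dC) dD
           (starE (dA * dB) dC dD \<G> (starE dA dB dC \<F> (star dA dB \<E> \<rho>)))
         = star dA dD (\<G> \<circ> \<F> \<circ> \<E>) \<rho>"
proof -
  let ?X = "starE dA dB dC \<F> (star dA dB \<E> \<rho>)"
  let ?Z = "starE (dA * dB) dC dD \<G> ?X"
  have q0: "qsos star starE ([dA] @ [dB]) (star dA dB \<E> \<rho>)"
    using qsos_star[OF assms(4,5,11,8)] by simp
  have "qsos star starE ([dA] @ [dB] @ [dC]) (starE (prod_list [dA]) (prod_list [dB]) dC \<F> (star dA dB \<E> \<rho>))"
    by (rule qsos_iter[OF q0 assms(6)]) (use assms(9) in simp)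
  hence "qsos star starE ([dA, dB] @ [dC]) ?X" by simp
  hence qon: "qsos_on star starE (dA*dB) dC ?X" unfolding qsos_on_def
    by (intro exI[of _ "[dA, dB]"] exI[of _ "[dC]"]) simp
  have PX: "ptrace_mid dA dB dC ?X = star dA dC (\<F> \<circ> \<E>) \<rho>"
    using assms(3,4,5,6,8,9,11) unfolding axiom_P_def by blast
  have FE: "channel dA dC (\<F> \<circ> \<E>)" by (rule channel_comp[OF assms(8,9)])
  have E1: "lift_first (dA*dB) dA (dC*dD) (pt dA dB) ?Z = starE dA dC dD \<G> (lift_first (dA*dB) dA dC (pt dA dB) ?X)"
    using assms(2) qon assms(4,5,6,7,10) pt_cptni[of dA dB] unfolding axiom_E_def by simp
  have PZ: "ptrace_mid dA dC dD (starE dA dC dD \<G> (star dA dC (\<F> \<circ> \<E>) \<rho>)) = star dA dD (\<G> \<circ> (\<F> \<circ> \<E>)) \<rho>"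
    using assms(3,4,6,7,10,11) FE unfolding axiom_P_def by blast
  have "ptrace_mid dA (dB * dC) dD ?Z = ptrace_mid dA dC dD (lift_first (dA*dB) dA (dC*dD) (pt dA dB) ?Z)"
    by (rule ptrace_two)
  also have "\<dots> = ptrace_mid dA dC dD (starE dA dC dD \<G> (star dA dC (\<F> \<circ> \<E>) \<rho>))"
    using E1 by (simp only: lift_first_pt[of dA dB dC ?X] PX)
  also have "\<dots> = star dA dD (\<G> \<circ> \<F> \<circ> \<E>) \<rho>" using PZ by (simp add: o_assoc)
  finally show ?thesis .
qed
end
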